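(* Let $(S;A)$ be sanitized, let $(T;E) = \mathit{ker}(S;A)$, and let $\alpha = \exists x_1\ldots x_k.(t \bowtie u)$ with $\mathrm{bv}(\alpha) \cap (\mathrm{vars}(S) \cup \mathrm{vars}(A)) = \emptyset$. Suppose there is a substitution $\mu$ with $\mathrm{dom}(\mu) = \mathrm{bv}(\alpha)$ such that: 1. $T \vdash_{dy} \mu(x)$ for all $x \in \mathrm{dom}(\mu)$; 2. $\mathrm{pos}_x(r) \subseteq \mathbb{A}(T \cup \mathrm{dom}(\mu), r)$ for all $x \in \mathrm{dom}(\mu)$ and $r \in \{t,u\}$; 3. $(T;E) \vdash_{eq} \mu(t) \bowtie \mu(u)$. Then there is a substitution $\nu$ with $\mathrm{dom}(\nu) = \mathrm{bv}(\alpha)$ satisfying the same three conditions (with $\nu$ in place of $\mu$) which is $M$-bounded, i.e. $|\mathrm{st}(\nu(x))| \le M$ for every $x \in \mathrm{dom}(\nu)$, where $M = |\mathrm{st}(S) \cup \mathrm{st}(A \cup \{\alpha\})|$.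
   Context: $\mathrm{st}(\cdot)$ denotes the set of subterms of a term, or of the terms occurring in a set of terms or assertions. Terms. Fix names $\mathscr{N}$, variables $\mathscr{V}$ with quantification variables $\mathscr{V}_q \subseteq \mathscr{V}$, and keys $\mathscr{K} \subseteq \mathscr{N}$ with inverses. Terms: $t ::= x \mid m \mid (t,u) \mid \{t\}_k$ with $k \in \mathscr{K} \cup \mathscr{V}$. $X \vdash_{dy} t$ means derivable by the Dolev–Yao rules: ax ($t \in X$); fst/snd; pair; dec (from $\{t\}_k$ and $k^{-1}$ get $t$); enc. Positions. $\mathrm{Pos}(m) = \{\varepsilon\}$ for names and variables, and $\mathrm{Pos}(\mathsf{f}(t,u)) = \{\varepsilon\} \cup 0\,\mathrm{Pos}(t) \cup 1\,\mathrm{Pos}(u)$. $t|_p$ is the subterm at $p$, and $\mathrm{pos}_x(t) = \{p : t|_p = x\}$. With $\mathbb{Q}_p = \{\varepsilon\} \cup \{qi \in \mathrm{Pos}(t) : q \text{ a proper prefix of } p\}$, $\mathbb{A}(S,t) = \{p : S \vdash_{dy} t|_q \ \forall q \in \mathbb{Q}_p\}$. Assertions. An assertion is $\exists x_1\ldots x_k.(t \bowtie u)$ with $x_i \in \mathscr{V}_q$. Its positions are $0^k0p$ and $0^k1p$, and its abstractable positions w.r.t. $S$ are computed with $\mathbb{A}(S \cup \{x_1,\ldots,x_k\}, \cdot)$ on each side. $\mathrm{fv}$ and $\mathrm{bv}$ are free and bound variables; $\mathrm{pubs}(\alpha)$ is the set of maximal subterms of $\alpha$ without $\mathscr{V}_q$-variables.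 Proof rules for $S; A \vdash \alpha$: - ax; eq ($t \bowtie t$ if $S \vdash_{dy} t$); sym; - cons: from $t_0 \bowtie u_0$ and $t_1 \bowtie u_1$ get $\mathsf{f}(t_0,t_1) \bowtie \mathsf{f}(u_0,u_1)$; - $\mathsf{proj}_i$: the inverse of cons, allowed if $S \vdash_{dy} t_0, t_1, u_0, u_1$; - trans: from $t_1 \bowtie t_2, \ldots, t_k \bowtie t_{k+1}$ get $t_1 \bowtie t_{k+1}$; - $\exists$intro: from $\alpha[\mathrm{pos}_x(\alpha) \mapsto w]$ with $S \vdash_{dy} w$ and $\mathrm{pos}_x(\alpha) \subseteq \mathbb{A}(S \cup \{x\}, \alpha)$ get $\exists x.\alpha$; - $\exists$elim: from $\exists x.\alpha$ and $S \cup \{x\}; A \cup \{\alpha\} \vdash \gamma$ get $\gamma$, with $x$ not free in $S, A, \gamma$. $\vdash_{eq}$ denotes derivability without the two $\exists$ rules. Sanitized and kernel. $(S;A)$ is sanitized if $(\mathrm{vars}(S) \cup \mathrm{fv}(A)) \cap \mathscr{V}_q = \emptyset$ and $\mathrm{pubs}(\beta) \subseteq S$ for all $\beta \in A$. $\mathit{ker}(S;A) = (S \cup \mathrm{bv}(A);\ \{t \bowtie u : \exists\vec{x}.(t \bowtie u) \in A\})$. Standing assumptions: no variable occurs both free and bound in an assertion; the kernel $(T;E)$ is consistent, i.e. some ground substitution $\lambda$ has $\lambda(t) = \lambda(u)$ for all $t \bowtie u \in E$. *)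

theory Defs
  imports Main
begin

text \<open>Names 'n, variables 'v. Enc t k is the encryption of t under key k;
  well-formed terms only use keys from K (a subset of the names) or variables.\<close>

datatype ('n, 'v) trm = Var 'v | Nm 'n | Pair "('n, 'v) trm" "('n, 'v) trm"
  | Enc "('n, 'v) trm" "('n, 'v) trm"

fun vars :: "('n, 'v) trm \<Rightarrow> 'v set" where
  "vars (Var x) = {x}"
| "vars (Nm n) = {}"
| "vars (Pair t u) = vars t \<union> vars u"
| "vars (Enc t k) = vars t \<union> vars k"

definition varss :: "('n, 'v) trm set \<Rightarrow> 'v set" where
  "varss S = (\<Union>t\<in>S. vars t)"

definition is_key :: "'n set \<Rightarrow> ('n, 'v) trm \<Rightarrow> bool" where
  "is_key K k \<longleftrightarrow> (\<exists>n\<in>K. k = Nm n) \<or> (\<exists>x. k = Var x)"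

fun wf_trm :: "'n set \<Rightarrow> ('n, 'v) trm \<Rightarrow> bool" where
  "wf_trm K (Var x) = True"
| "wf_trm K (Nm n) = True"
| "wf_trm K (Pair t u) = (wf_trm K t \<and> wf_trm K u)"
| "wf_trm K (Enc t k) = (wf_trm K t \<and> is_key K k)"

fun kinv :: "('n \<Rightarrow> 'n) \<Rightarrow> ('n, 'v) trm \<Rightarrow> ('n, 'v) trm" where
  "kinv ik (Nm n) = Nm (ik n)"
| "kinv ik k = k"

fun st :: "('n, 'v) trm \<Rightarrow> ('n, 'v) trm set" where
  "st (Var x) = {Var x}"
| "st (Nm n) = {Nm n}"
| "st (Pair t u) = insert (Pair t u) (st t \<union> st u)"
| "st (Enc t k) = insert (Enc t k) (st t \<union> st k)"

definition sts :: "('n, 'v) trm set \<Rightarrow> ('n, 'v) trm set" where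
  "sts S = (\<Union>t\<in>S. st t)"

inductive dy :: "'n set \<Rightarrow> ('n \<Rightarrow> 'n) \<Rightarrow> ('n, 'v) trm set \<Rightarrow> ('n, 'v) trm \<Rightarrow> bool"
  for K ik X where
  dy_ax: "t \<in> X \<Longrightarrow> dy K ik X t"
| dy_fst: "dy K ik X (Pair t u) \<Longrightarrow> dy K ik X t"
| dy_snd: "dy K ik X (Pair t u) \<Longrightarrow> dy K ik X u"
| dy_pair: "dy K ik X t \<Longrightarrow> dy K ik X u \<Longrightarrow> dy K ik X (Pair t u)"
| dy_dec: "dy K ik X (Enc t k) \<Longrightarrow> dy K ik X (kinv ik k) \<Longrightarrow> dy K ik X t"
| dy_enc: "dy K ik X t \<Longrightarrow> dy K ik X k \<Longrightarrow> is_key K k \<Longrightarrow> dy K ik X (Enc t k)"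

fun Pos :: "('n, 'v) trm \<Rightarrow> nat list set" where
  "Pos (Var x) = {[]}"
| "Pos (Nm n) = {[]}"
| "Pos (Pair t u) = insert [] ((Cons 0) ` Pos t \<union> (Cons 1) ` Pos u)"
| "Pos (Enc t k) = insert [] ((Cons 0) ` Pos t \<union> (Cons 1) ` Pos k)"

fun subt :: "('n, 'v) trm \<Rightarrow> nat list \<Rightarrow> ('n, 'v) trm option" where
  "subt t [] = Some t"
| "subt (Pair t u) (i # p) = (if i = 0 then subt t p else if i = 1 then subt u p else None)"
| "subt (Enc t k) (i # p) = (if i = 0 then subt t p else if i = 1 then subt k p else None)"
| "subt _ (i # p) = None"

definition pos_of :: "'v \<Rightarrow> ('n, 'v) trm \<Rightarrow> nat list set" where
  "pos_of x t = {p \<in> Pos t. subt t p = Some (Var x)}"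

definition Qp :: "('n, 'v) trm \<Rightarrow> nat list \<Rightarrow> nat list set" where
  "Qp t p = insert [] {q @ [i] | q i. q @ [i] \<in> Pos t \<and> (\<exists>r. r \<noteq> [] \<and> p = q @ r)}"

definition absp :: "'n set \<Rightarrow> ('n \<Rightarrow> 'n) \<Rightarrow> ('n, 'v) trm set \<Rightarrow> ('n, 'v) trm \<Rightarrow> nat list set" where
  "absp K ik X t = {p \<in> Pos t. \<forall>q \<in> Qp t p. \<exists>s. subt t q = Some s \<and> dy K ik X s}"

fun subst :: "('v \<rightharpoonup> ('n, 'v) trm) \<Rightarrow> ('n, 'v) trm \<Rightarrow> ('n, 'v) trm" where
  "subst \<mu> (Var x) = (case \<mu> x of Some s \<Rightarrow> s | None \<Rightarrow> Var x)"
| "subst \<mu> (Nm n) = Nm n"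
| "subst \<mu> (Pair t u) = Pair (subst \<mu> t) (subst \<mu> u)"
| "subst \<mu> (Enc t k) = Enc (subst \<mu> t) (subst \<mu> k)"

section \<open>Assertions  \<exists>xs.(t \<bowtie> u)\<close>

type_synonym ('n, 'v) asrt = "'v list \<times> ('n, 'v) trm \<times> ('n, 'v) trm"

definition bv :: "('n, 'v) asrt \<Rightarrow> 'v set" where
  "bv a = set (fst a)"

definition asrt_vars :: "('n, 'v) asrt \<Rightarrow> 'v set" where
  "asrt_vars a = set (fst a) \<union> vars (fst (snd a)) \<union> vars (snd (snd a))"

definition fv :: "('n, 'v) asrt \<Rightarrow> 'v set" where
  "fv a = (vars (fst (snd a)) \<union> vars (snd (snd a))) - set (fst a)"

definition st_asrt :: "('n, 'v) asrt \<Rightarrow> ('n, 'v) trm set" where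
  "st_asrt a = st (fst (snd a)) \<union> st (snd (snd a))"

definition st_asrts :: "('n, 'v) asrt set \<Rightarrow> ('n, 'v) trm set" where
  "st_asrts A = (\<Union>a\<in>A. st_asrt a)"

definition wf_asrt :: "'n set \<Rightarrow> 'v set \<Rightarrow> ('n, 'v) asrt \<Rightarrow> bool" where
  "wf_asrt K Vq a \<longleftrightarrow> set (fst a) \<subseteq> Vq \<and> wf_trm K (fst (snd a)) \<and> wf_trm K (snd (snd a))"

definition pubs :: "'v set \<Rightarrow> ('n, 'v) asrt \<Rightarrow> ('n, 'v) trm set" where
  "pubs Vq a = {s \<in> st_asrt a. vars s \<inter> Vq = {} \<and>
      \<not> (\<exists>s' \<in> st_asrt a. s' \<noteq> s \<and> s \<in> st s' \<and> vars s' \<inter> Vq = {})}"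

definition sanitized :: "'v set \<Rightarrow> ('n, 'v) trm set \<Rightarrow> ('n, 'v) asrt set \<Rightarrow> bool" where
  "sanitized Vq S A \<longleftrightarrow> (varss S \<union> (\<Union>a\<in>A. fv a)) \<inter> Vq = {} \<and> (\<forall>b\<in>A. pubs Vq b \<subseteq> S)"

definition ker_T :: "('n, 'v) trm set \<Rightarrow> ('n, 'v) asrt set \<Rightarrow> ('n, 'v) trm set" where
  "ker_T S A = S \<union> Var ` (\<Union>a\<in>A. bv a)"

definition ker_E :: "('n, 'v) asrt set \<Rightarrow> (('n, 'v) trm \<times> ('n, 'v) trm) set" where
  "ker_E A = {(t, u) | xs t u. (xs, t, u) \<in> A}"

definition consistent :: "(('n, 'v) trm \<times> ('n, 'v) trm) set \<Rightarrow> bool" where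
  "consistent E \<longleftrightarrow> (\<exists>lam :: 'v \<Rightarrow> ('n, 'v) trm. (\<forall>x. vars (lam x) = {}) \<and>
      (\<forall>(t, u) \<in> E. subst (Some \<circ> lam) t = subst (Some \<circ> lam) u))"

section \<open>Equality derivations without the \<exists> rules:  (T;E) \<turnstile>eq t \<bowtie> u\<close>

inductive eqd :: "'n set \<Rightarrow> ('n \<Rightarrow> 'n) \<Rightarrow> ('n, 'v) trm set \<Rightarrow> (('n, 'v) trm \<times> ('n, 'v) trm) set
    \<Rightarrow> ('n, 'v) trm \<Rightarrow> ('n, 'v) trm \<Rightarrow> bool"
  for K ik T E where
  eq_ax: "(t, u) \<in> E \<Longrightarrow> eqd K ik T E t u"
| eq_refl: "dy K ik T t \<Longrightarrow> eqd K ik T E t t"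
| eq_sym: "eqd K ik T E t u \<Longrightarrow> eqd K ik T E u t"
| eq_cons_pair: "eqd K ik T E t0 u0 \<Longrightarrow> eqd K ik T E t1 u1 \<Longrightarrow>
     eqd K ik T E (Pair t0 t1) (Pair u0 u1)"
| eq_cons_enc: "eqd K ik T E t0 u0 \<Longrightarrow> eqd K ik T E t1 u1 \<Longrightarrow>
     eqd K ik T E (Enc t0 t1) (Enc u0 u1)"
| eq_proj0_pair: "eqd K ik T E (Pair t0 t1) (Pair u0 u1) \<Longrightarrow> dy K ik T t0 \<Longrightarrow> dy K ik T t1 \<Longrightarrow>
     dy K ik T u0 \<Longrightarrow> dy K ik T u1 \<Longrightarrow> eqd K ik T E t0 u0"
| eq_proj1_pair: "eqd K ik T E (Pair t0 t1) (Pair u0 u1) \<Longrightarrow> dy K ik T t0 \<Longrightarrow> dy K ik T t1 \<Longrightarrow>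
     dy K ik T u0 \<Longrightarrow> dy K ik T u1 \<Longrightarrow> eqd K ik T E t1 u1"
| eq_proj0_enc: "eqd K ik T E (Enc t0 t1) (Enc u0 u1) \<Longrightarrow> dy K ik T t0 \<Longrightarrow> dy K ik T t1 \<Longrightarrow>
     dy K ik T u0 \<Longrightarrow> dy K ik T u1 \<Longrightarrow> eqd K ik T E t0 u0"
| eq_proj1_enc: "eqd K ik T E (Enc t0 t1) (Enc u0 u1) \<Longrightarrow> dy K ik T t0 \<Longrightarrow> dy K ik T t1 \<Longrightarrow>
     dy K ik T u0 \<Longrightarrow> dy K ik T u1 \<Longrightarrow> eqd K ik T E t1 u1"
| eq_trans: "eqd K ik T E t1 t2 \<Longrightarrow> eqd K ik T E t2 t3 \<Longrightarrow> eqd K ik T E t1 t3"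

definition witness_ok :: "'n set \<Rightarrow> ('n \<Rightarrow> 'n) \<Rightarrow> ('n, 'v) trm set \<Rightarrow> (('n, 'v) trm \<times> ('n, 'v) trm) set
    \<Rightarrow> ('n, 'v) asrt \<Rightarrow> ('v \<rightharpoonup> ('n, 'v) trm) \<Rightarrow> bool" where
  "witness_ok K ik T E \<alpha> \<mu> \<longleftrightarrow>
     dom \<mu> = bv \<alpha> \<and>
     (\<forall>x \<in> dom \<mu>. dy K ik T (the (\<mu> x))) \<and>
     (\<forall>x \<in> dom \<mu>. \<forall>r \<in> {fst (snd \<alpha>), snd (snd \<alpha>)}.
         pos_of x r \<subseteq> absp K ik (T \<union> Var ` dom \<mu>) r) \<and>
     eqd K ik T E (subst \<mu> (fst (snd \<alpha>))) (subst \<mu> (snd (snd \<alpha>)))"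

end

theory Submission
  imports Defs
begin



definition cmp :: "('n,'v) trm \<Rightarrow> bool" where
  "cmp w = (case w of Pair _ _ \<Rightarrow> True | Enc _ _ \<Rightarrow> True | _ \<Rightarrow> False)"

lemma cmp_simps[simp]: "\<not> cmp (Var x)" "\<not> cmp (Nm n)" "cmp (Pair a b)" "cmp (Enc a b)"
  by (auto simp: cmp_def)

fun args :: "('n,'v) trm \<Rightarrow> ('n,'v) trm list" where
  "args (Pair a b) = [a, b]"
| "args (Enc a b) = [a, b]"
| "args _ = []"

lemma st_refl[simp]: "t \<in> st t" by (cases t) auto

lemma st_trans: "a \<in> st b \<Longrightarrow> b \<in> st c \<Longrightarrow> a \<in> st c"
  by (induction c) auto

lemma st_size: "a \<in> st b \<Longrightarrow> size a \<le> size b"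
  by (induction b) auto

lemma st_size_less: "a \<in> st b \<Longrightarrow> a \<noteq> b \<Longrightarrow> size a < size b"
  by (induction b) (auto dest: st_size)

lemma st_antisym: "a \<in> st b \<Longrightarrow> b \<in> st a \<Longrightarrow> a = b"
  using st_size st_size_less by fastforce

lemma vars_st: "x \<in> vars t \<longleftrightarrow> Var x \<in> st t"
  by (induction t) auto

lemma finite_st[simp]: "finite (st t)"
  by (induction t) auto

lemma st_subst: "a \<in> st b \<Longrightarrow> subst \<sigma> a \<in> st (subst \<sigma> b)"
  by (induction b) auto

lemma subst_size_less: "a \<in> st b \<Longrightarrow> a \<noteq> b \<Longrightarrow> size (subst \<sigma> a) < size (subst \<sigma> b)"
proof (induction b)
  case (Pair b1 b2)
  then show ?case
    using st_size[OF st_subst[of a b1 \<sigma>]] st_size[OF st_subst[of a b2 \<sigma>]] by auto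
next
  case (Enc b1 b2)
  then show ?case
    using st_size[OF st_subst[of a b1 \<sigma>]] st_size[OF st_subst[of a b2 \<sigma>]] by auto
qed auto

lemma subst_cong: "(\<forall>x\<in>vars t. \<sigma> x = \<sigma>' x) \<Longrightarrow> subst \<sigma> t = subst \<sigma>' t"
  by (induction t) auto

lemma subst_id: "(\<forall>x\<in>vars t. \<sigma> x = None) \<Longrightarrow> subst \<sigma> t = t"
  by (induction t) auto

lemma st_subst_cases: "v \<in> st (subst \<sigma> t) \<Longrightarrow>
   v \<in> subst \<sigma> ` st t \<or> (\<exists>x\<in>vars t. \<sigma> x \<noteq> None \<and> v \<in> st (the (\<sigma> x)))"
proof (induction t)
  case (Var x)
  then show ?case by (cases "\<sigma> x") auto
next
  case (Pair t1 t2)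
  then show ?case by force
next
  case (Enc t1 t2)
  then show ?case by force
qed auto

lemma subst_vary:
  assumes "\<forall>x. x \<noteq> z \<longrightarrow> \<sigma> x = \<sigma>' x" "\<sigma> z \<noteq> \<sigma>' z" "\<sigma> z \<noteq> None" "\<sigma>' z \<noteq> None"
  shows "z \<in> vars p \<Longrightarrow> subst \<sigma> p \<noteq> subst \<sigma>' p"
  using assms by (induction p) auto

lemma child_exists: "v \<in> st r \<Longrightarrow> v \<noteq> r \<Longrightarrow> \<exists>p\<in>st r. v \<in> set (args p)"
  by (induction r) auto

lemma args_subst: "cmp t' \<Longrightarrow> args (subst \<sigma> t') = map (subst \<sigma>) (args t')"
  by (cases t') auto

lemma args_st: "a \<in> set (args p) \<Longrightarrow> a \<in> st p"
  by (cases p) auto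

lemma args_cmp: "a \<in> set (args p) \<Longrightarrow> cmp p"
  by (cases p) auto

lemma subst_eq_args: "subst \<sigma> p = subst \<sigma> c \<Longrightarrow> cmp p \<Longrightarrow> cmp c \<Longrightarrow>
   map (subst \<sigma>) (args p) = map (subst \<sigma>) (args c)"
  by (cases p; cases c) auto

lemma sts_iff: "v \<in> sts S \<longleftrightarrow> (\<exists>s\<in>S. v \<in> st s)"
  by (auto simp: sts_def)

lemma key_atom: "is_key K k \<Longrightarrow> \<not> cmp k"
  by (auto simp: is_key_def)

lemma key_wf: "is_key K k \<Longrightarrow> wf_trm K k"
  by (auto simp: is_key_def)

section \<open>Dolev-Yao facts\<close>

lemma dy_wf: "dy K ik T w \<Longrightarrow> \<forall>w\<in>T. wf_trm K w \<Longrightarrow> wf_trm K w"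
  by (induction rule: dy.induct) auto

lemma dy_st: "dy K ik T w \<Longrightarrow> v \<in> st w \<Longrightarrow> dy K ik T v \<or> v \<in> sts T"
proof (induction arbitrary: v rule: dy.induct)
  case (dy_ax t)
  then show ?case by (auto simp: sts_iff)
next
  case (dy_fst t u)
  then show ?case by auto
next
  case (dy_snd t u)
  then show ?case by auto
next
  case (dy_pair t u)
  then show ?case by (auto intro: dy.dy_pair)
next
  case (dy_dec t k)
  then show ?case by auto
next
  case (dy_enc t k)
  then show ?case by (auto intro: dy.dy_enc)
qed

lemma dy_atom: "dy K ik T w \<Longrightarrow> v \<in> st w \<Longrightarrow> \<not> cmp v \<Longrightarrow> v \<in> sts T"
proof (induction arbitrary: v rule: dy.induct)
  case (dy_ax t)
  then show ?case by (auto simp: sts_iff)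
qed auto

lemma dy_ne: "dy K ik T w \<Longrightarrow> T \<noteq> {}"
  by (induction rule: dy.induct) auto

lemma wf_st: "wf_trm K w \<Longrightarrow> v \<in> st w \<Longrightarrow> wf_trm K v"
  by (induction w) (auto simp: is_key_def)

section \<open>Equality derivations\<close>

lemma eqd_sound: "eqd K ik T E a b \<Longrightarrow> (\<forall>(a,b)\<in>E. subst \<sigma> a = subst \<sigma> b) \<Longrightarrow> subst \<sigma> a = subst \<sigma> b"
  by (induction rule: eqd.induct) auto

lemma eqd_atom: "eqd K ik T E a b \<Longrightarrow>
   (\<not> cmp a \<longrightarrow> a \<in> sts T \<or> a \<in> fst ` E \<or> a \<in> snd ` E) \<and>
   (\<not> cmp b \<longrightarrow> b \<in> sts T \<or> b \<in> fst ` E \<or> b \<in> snd ` E)"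
proof (induction rule: eqd.induct)
  case (eq_ax t u)
  then show ?case by force
next
  case (eq_refl t)
  then show ?case using dy_atom[OF eq_refl(1) st_refl] by auto
next
  case (eq_proj0_pair t0 t1 u0 u1)
  then show ?case using dy_atom[OF _ st_refl] by blast
next
  case (eq_proj1_pair t0 t1 u0 u1)
  then show ?case using dy_atom[OF _ st_refl] by blast
next
  case (eq_proj0_enc t0 t1 u0 u1)
  then show ?case using dy_atom[OF _ st_refl] by blast
next
  case (eq_proj1_enc t0 t1 u0 u1)
  then show ?case using dy_atom[OF _ st_refl] by blast
qed auto

inductive good for K ik T E where
  g_dy: "dy K ik T w \<Longrightarrow> good K ik T E w"
| g_l: "(w, w2) \<in> E \<Longrightarrow> good K ik T E w"
| g_r: "(w2, w) \<in> E \<Longrightarrow> good K ik T E w"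
| g_pair: "good K ik T E a \<Longrightarrow> good K ik T E b \<Longrightarrow> good K ik T E (Pair a b)"
| g_enc: "good K ik T E a \<Longrightarrow> good K ik T E b \<Longrightarrow> good K ik T E (Enc a b)"

lemma eqd_good: "eqd K ik T E a b \<Longrightarrow> good K ik T E a \<and> good K ik T E b"
  by (induction rule: eqd.induct) (auto intro: good.intros)

lemma good_dy: "good K ik T E w \<Longrightarrow> wf_trm K w \<Longrightarrow> vars w \<inter> Vq = {} \<Longrightarrow>
   (\<forall>e e2. ((e, e2) \<in> E \<or> (e2, e) \<in> E) \<longrightarrow> vars e \<inter> Vq = {} \<longrightarrow> dy K ik T e) \<Longrightarrow>
   dy K ik T w"
proof (induction rule: good.induct)
  case (g_enc a b)
  then show ?case using key_wf[of K b] by (auto intro: dy.dy_enc)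
qed (auto intro: dy.intros)

section \<open>Replacement\<close>

fun rep :: "('n,'v) trm set \<Rightarrow> ('n,'v) trm \<Rightarrow> ('n,'v) trm \<Rightarrow> ('n,'v) trm" where
  "rep C s (Var x) = (if Var x \<in> C then s else Var x)"
| "rep C s (Nm n) = (if Nm n \<in> C then s else Nm n)"
| "rep C s (Pair a b) = (if Pair a b \<in> C then s else Pair (rep C s a) (rep C s b))"
| "rep C s (Enc a b) = (if Enc a b \<in> C then s else Enc (rep C s a) (rep C s b))"

lemma rep_id: "(\<forall>v\<in>st w. v \<notin> C) \<Longrightarrow> rep C s w = w"
  by (induction w) auto

lemma rep_atom: "\<not> cmp w \<Longrightarrow> \<forall>a\<in>C. cmp a \<Longrightarrow> rep C s w = w"
  by (cases w) auto

lemma rep_st: "st (rep C s w) \<subseteq> rep C s ` (st w - C) \<union> st s"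
proof (induction w)
  case (Var x)
  then show ?case by auto
next
  case (Nm x)
  then show ?case by auto
next
  case (Pair w1 w2)
  show ?case
  proof (cases "Pair w1 w2 \<in> C")
    case False
    have "Pair (rep C s w1) (rep C s w2) \<in> rep C s ` (st (Pair w1 w2) - C)"
      using False by (intro image_eqI[where x="Pair w1 w2"]) auto
    moreover have "rep C s ` (st w1 - C) \<union> rep C s ` (st w2 - C) \<subseteq> rep C s ` (st (Pair w1 w2) - C)"
      by auto
    ultimately show ?thesis using Pair.IH False by auto
  qed auto
next
  case (Enc w1 w2)
  show ?case
  proof (cases "Enc w1 w2 \<in> C")
    case False
    have "Enc (rep C s w1) (rep C s w2) \<in> rep C s ` (st (Enc w1 w2) - C)"
      using False by (intro image_eqI[where x="Enc w1 w2"]) auto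
    moreover have "rep C s ` (st w1 - C) \<union> rep C s ` (st w2 - C) \<subseteq> rep C s ` (st (Enc w1 w2) - C)"
      by auto
    ultimately show ?thesis using Enc.IH False by auto
  qed auto
qed

definition AC :: "('n,'v) trm set \<Rightarrow> bool" where
  "AC C \<longleftrightarrow> (\<forall>a\<in>C. \<forall>c\<in>C. c \<in> st a \<longrightarrow> c = a)"

lemma rep_proper: "AC C \<Longrightarrow> a \<in> C \<Longrightarrow> b \<in> st a \<Longrightarrow> b \<noteq> a \<Longrightarrow> rep C s b = b"
  apply (rule rep_id)
  unfolding AC_def using st_trans st_antisym by metis




lemma acyc[simp]: "Pair a b \<noteq> a" "Pair a b \<noteq> b" "Enc a b \<noteq> a" "Enc a b \<noteq> b"
  "a \<noteq> Pair a b" "b \<noteq> Pair a b" "a \<noteq> Enc a b" "b \<noteq> Enc a b"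
  by (auto dest: arg_cong[where f=size])

lemma rep_in: "a \<in> C \<Longrightarrow> rep C s a = s"
  by (cases a) auto

locale ctx =
  fixes K :: "'n set" and ik :: "'n \<Rightarrow> 'n" and T :: "('n,'v) trm set"
    and E :: "(('n,'v) trm \<times> ('n,'v) trm) set" and D B :: "('n,'v) trm set"
    and t u :: "('n,'v) trm" and X :: "'v set" and lam :: "'v \<Rightarrow> ('n,'v) trm"
  assumes wfT: "\<And>w. w \<in> T \<Longrightarrow> wf_trm K w"
    and D_cl: "\<And>w v. w \<in> D \<Longrightarrow> v \<in> st w \<Longrightarrow> v \<in> D"
    and T_D: "T \<subseteq> D"
    and E_D: "\<And>a b. (a,b) \<in> E \<Longrightarrow> a \<in> D \<and> b \<in> D"
    and E_B: "\<And>a b. (a,b) \<in> E \<Longrightarrow> a \<in> B \<and> b \<in> B"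
    and lam_E: "\<And>a b. (a,b) \<in> E \<Longrightarrow> subst (Some \<circ> lam) a = subst (Some \<circ> lam) b"
    and D_X: "\<And>w. w \<in> D \<Longrightarrow> vars w \<inter> X = {}"
    and B_fin: "finite B"
    and B_cl: "\<And>w v. w \<in> B \<Longrightarrow> v \<in> st w \<Longrightarrow> v \<in> B"
    and tB: "t \<in> B" and uB: "u \<in> B"
    and D_B: "\<And>c. c \<in> D \<Longrightarrow> \<not> dy K ik T c \<Longrightarrow> c \<in> B"
    and D_B2: "\<And>w. w \<in> D \<Longrightarrow> w \<notin> B \<Longrightarrow> \<exists>z. w = Var z"
    and goodT: "\<And>c s. c \<in> sts T \<Longrightarrow> eqd K ik T E s c \<Longrightarrow> dy K ik T c"
begin

abbreviation "eqE \<equiv> eqd K ik T E"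
abbreviation "dyT \<equiv> dy K ik T"

lemma stsT_D: "sts T \<subseteq> D"
  using T_D D_cl by (fastforce simp: sts_iff)

lemma sound: "eqE a b \<Longrightarrow> subst (Some \<circ> lam) a = subst (Some \<circ> lam) b"
  by (rule eqd_sound) (use lam_E in auto)

lemma rep_dy:
  assumes C: "\<forall>a\<in>C. cmp a \<and> a \<notin> D" and ac: "AC C" and s': "dyT s'"
  shows "dyT w \<Longrightarrow> dyT (rep C s' w)"
proof (induction rule: dy.induct)
  case (dy_ax w)
  have "st w \<subseteq> sts T" using dy_ax by (auto simp: sts_iff)
  then have "\<forall>v\<in>st w. v \<notin> C" using C stsT_D by blast
  then show ?case using dy_ax by (simp add: rep_id dy.dy_ax)
next
  case (dy_fst a b)
  show ?case
  proof (cases "Pair a b \<in> C")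
    case True
    then have "rep C s' a = a" using rep_proper[OF ac True, of a] by auto
    then show ?thesis using dy_fst(1) by (auto intro: dy.dy_fst)
  next
    case False then show ?thesis using dy_fst(2) by (auto intro: dy.dy_fst)
  qed
next
  case (dy_snd a b)
  show ?case
  proof (cases "Pair a b \<in> C")
    case True
    then have "rep C s' b = b" using rep_proper[OF ac True, of b] by auto
    then show ?thesis using dy_snd(1) by (auto intro: dy.dy_snd)
  next
    case False then show ?thesis using dy_snd(2) by (auto intro: dy.dy_snd)
  qed
next
  case (dy_pair a b)
  then show ?case using s' by (auto intro: dy.dy_pair)
next
  case (dy_dec a k)
  show ?case
  proof (cases "Enc a k \<in> C")
    case True
    then have "rep C s' a = a" using rep_proper[OF ac True, of a] by auto
    then show ?thesis using dy.dy_dec[OF dy_dec.hyps] by simp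
  next
    case False
    have "wf_trm K (Enc a k)" using dy_wf[OF dy_dec.hyps(1)] wfT by auto
    then have "\<not> cmp k" using key_atom by auto
    then have k: "rep C s' k = k" "rep C s' (kinv ik k) = kinv ik k"
      using C by (auto intro!: rep_atom, cases k, auto)
    then show ?thesis using dy_dec.IH False by (auto intro: dy.dy_dec)
  qed
next
  case (dy_enc a k)
  show ?case
  proof (cases "Enc a k \<in> C")
    case True
    then show ?thesis using s' by simp
  next
    case False
    have "rep C s' k = k" using key_atom[OF dy_enc.hyps(3)] C rep_atom by blast
    then show ?thesis using dy_enc False by (auto intro: dy.dy_enc)
  qed
qed

lemma rep_eqd:
  assumes C: "\<forall>a\<in>C. cmp a \<and> a \<notin> D" and ac: "AC C" and s': "dyT s'"
    and iv: "\<forall>a\<in>C. \<forall>b. eqE a b \<longrightarrow> b \<in> C \<or> eqE s' a"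
  shows "eqE a b \<Longrightarrow> eqE (rep C s' a) (rep C s' b)"
proof (induction rule: eqd.induct)
  case (eq_ax a b)
  have "\<forall>v\<in>st a. v \<notin> C" "\<forall>v\<in>st b. v \<notin> C" using E_D[OF eq_ax] C D_cl by blast+
  then show ?case using eq_ax by (simp add: rep_id eqd.eq_ax)
next
  case (eq_refl a)
  then show ?case using rep_dy[OF C ac s'] by (auto intro: eqd.eq_refl)
next
  case (eq_sym a b)
  then show ?case by (auto intro: eqd.eq_sym)
next
  case (eq_trans a b c)
  then show ?case by (auto intro: eqd.eq_trans)
next
  case (eq_cons_pair t0 u0 t1 u1)
  note H = eq_cons_pair.hyps and I = eq_cons_pair.IH
  have o: "eqE (Pair t0 t1) (Pair u0 u1)" by (rule eqd.eq_cons_pair[OF H(1,2)])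
  show ?case
  proof (cases "Pair t0 t1 \<in> C"; cases "Pair u0 u1 \<in> C")
    assume A: "Pair t0 t1 \<in> C" and B: "Pair u0 u1 \<in> C"
    show ?thesis using A B s' by (simp add: eqd.eq_refl)
  next
    assume A: "Pair t0 t1 \<in> C" and B: "Pair u0 u1 \<notin> C"
    have r: "rep C s' t0 = t0" "rep C s' t1 = t1" using rep_proper[OF ac A] by auto
    have 1: "eqE s' (Pair t0 t1)" using iv A o B by blast
    have "eqE (Pair t0 t1) (Pair (rep C s' u0) (rep C s' u1))"
      using I(1,2) r by (metis eqd.eq_cons_pair)
    then show ?thesis using 1 A B by (auto intro: eqd.eq_trans)
  next
    assume A: "Pair t0 t1 \<notin> C" and B: "Pair u0 u1 \<in> C"
    have r: "rep C s' u0 = u0" "rep C s' u1 = u1" using rep_proper[OF ac B] by auto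
    have 1: "eqE s' (Pair u0 u1)" using iv B eqd.eq_sym[OF o] A by blast
    have "eqE (Pair (rep C s' t0) (rep C s' t1)) (Pair u0 u1)"
      using I(1,2) r by (metis eqd.eq_cons_pair)
    then show ?thesis using 1 A B by (auto intro: eqd.eq_trans eqd.eq_sym)
  next
    assume A: "Pair t0 t1 \<notin> C" and B: "Pair u0 u1 \<notin> C"
    show ?thesis using A B I(1,2) by (auto intro: eqd.eq_cons_pair)
  qed
next
  case (eq_proj0_pair t0 t1 u0 u1)
  note H = eq_proj0_pair.hyps and I = eq_proj0_pair.IH
  have o: "eqE t0 u0" by (rule eqd.eq_proj0_pair[OF H(1-5)])
  have dyr: "dyT (rep C s' u0)" "dyT (rep C s' u1)" "dyT (rep C s' t0)" "dyT (rep C s' t1)"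
    using rep_dy[OF C ac s'] H(2-5) by auto
  show ?case
  proof (cases "Pair t0 t1 \<in> C"; cases "Pair u0 u1 \<in> C")
    assume A: "Pair t0 t1 \<in> C" and B: "Pair u0 u1 \<in> C"
    have "rep C s' t0 = t0" "rep C s' u0 = u0" using rep_proper[OF ac A] rep_proper[OF ac B] by auto
    then show ?thesis using o by simp
  next
    assume A: "Pair t0 t1 \<in> C" and B: "Pair u0 u1 \<notin> C"
    have r: "rep C s' t0 = t0" "rep C s' t1 = t1" using rep_proper[OF ac A] by auto
    have 1: "eqE s' (Pair t0 t1)" using iv A H(1) B by blast
    have "eqE (Pair t0 t1) (Pair (rep C s' u0) (rep C s' u1))"
      using I(1) A B 1 by (auto intro: eqd.eq_trans eqd.eq_sym)
    then have "eqE t0 (rep C s' u0)"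
      by (rule eqd.eq_proj0_pair) (use H(2,3) dyr in auto)
    then show ?thesis using r by simp
  next
    assume A: "Pair t0 t1 \<notin> C" and B: "Pair u0 u1 \<in> C"
    have r: "rep C s' u0 = u0" "rep C s' u1 = u1" using rep_proper[OF ac B] by auto
    have 1: "eqE s' (Pair u0 u1)" using iv B eqd.eq_sym[OF H(1)] A by blast
    have "eqE (Pair (rep C s' t0) (rep C s' t1)) (Pair u0 u1)"
      using I(1) A B 1 by (auto intro: eqd.eq_trans eqd.eq_sym)
    then have "eqE (rep C s' t0) u0"
      by (rule eqd.eq_proj0_pair) (use H(4,5) dyr in auto)
    then show ?thesis using r by simp
  next
    assume A: "Pair t0 t1 \<notin> C" and B: "Pair u0 u1 \<notin> C"
    have "eqE (Pair (rep C s' t0) (rep C s' t1)) (Pair (rep C s' u0) (rep C s' u1))"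
      using I(1) A B by simp
    then show ?thesis by (rule eqd.eq_proj0_pair) (use dyr in auto)
  qed
next
  case (eq_proj1_pair t0 t1 u0 u1)
  note H = eq_proj1_pair.hyps and I = eq_proj1_pair.IH
  have o: "eqE t1 u1" by (rule eqd.eq_proj1_pair[OF H(1-5)])
  have dyr: "dyT (rep C s' u0)" "dyT (rep C s' u1)" "dyT (rep C s' t0)" "dyT (rep C s' t1)"
    using rep_dy[OF C ac s'] H(2-5) by auto
  show ?case
  proof (cases "Pair t0 t1 \<in> C"; cases "Pair u0 u1 \<in> C")
    assume A: "Pair t0 t1 \<in> C" and B: "Pair u0 u1 \<in> C"
    have "rep C s' t1 = t1" "rep C s' u1 = u1" using rep_proper[OF ac A] rep_proper[OF ac B] by auto
    then show ?thesis using o by simp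
  next
    assume A: "Pair t0 t1 \<in> C" and B: "Pair u0 u1 \<notin> C"
    have r: "rep C s' t0 = t0" "rep C s' t1 = t1" using rep_proper[OF ac A] by auto
    have 1: "eqE s' (Pair t0 t1)" using iv A H(1) B by blast
    have "eqE (Pair t0 t1) (Pair (rep C s' u0) (rep C s' u1))"
      using I(1) A B 1 by (auto intro: eqd.eq_trans eqd.eq_sym)
    then have "eqE t1 (rep C s' u1)"
      by (rule eqd.eq_proj1_pair) (use H(2,3) dyr in auto)
    then show ?thesis using r by simp
  next
    assume A: "Pair t0 t1 \<notin> C" and B: "Pair u0 u1 \<in> C"
    have r: "rep C s' u0 = u0" "rep C s' u1 = u1" using rep_proper[OF ac B] by auto
    have 1: "eqE s' (Pair u0 u1)" using iv B eqd.eq_sym[OF H(1)] A by blast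
    have "eqE (Pair (rep C s' t0) (rep C s' t1)) (Pair u0 u1)"
      using I(1) A B 1 by (auto intro: eqd.eq_trans eqd.eq_sym)
    then have "eqE (rep C s' t1) u1"
      by (rule eqd.eq_proj1_pair) (use H(4,5) dyr in auto)
    then show ?thesis using r by simp
  next
    assume A: "Pair t0 t1 \<notin> C" and B: "Pair u0 u1 \<notin> C"
    have "eqE (Pair (rep C s' t0) (rep C s' t1)) (Pair (rep C s' u0) (rep C s' u1))"
      using I(1) A B by simp
    then show ?thesis by (rule eqd.eq_proj1_pair) (use dyr in auto)
  qed
next
  case (eq_cons_enc t0 u0 t1 u1)
  note H = eq_cons_enc.hyps and I = eq_cons_enc.IH
  have o: "eqE (Enc t0 t1) (Enc u0 u1)" by (rule eqd.eq_cons_enc[OF H(1,2)])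
  show ?case
  proof (cases "Enc t0 t1 \<in> C"; cases "Enc u0 u1 \<in> C")
    assume A: "Enc t0 t1 \<in> C" and B: "Enc u0 u1 \<in> C"
    show ?thesis using A B s' by (simp add: eqd.eq_refl)
  next
    assume A: "Enc t0 t1 \<in> C" and B: "Enc u0 u1 \<notin> C"
    have r: "rep C s' t0 = t0" "rep C s' t1 = t1" using rep_proper[OF ac A] by auto
    have 1: "eqE s' (Enc t0 t1)" using iv A o B by blast
    have "eqE (Enc t0 t1) (Enc (rep C s' u0) (rep C s' u1))"
      using I(1,2) r by (metis eqd.eq_cons_enc)
    then show ?thesis using 1 A B by (auto intro: eqd.eq_trans)
  next
    assume A: "Enc t0 t1 \<notin> C" and B: "Enc u0 u1 \<in> C"
    have r: "rep C s' u0 = u0" "rep C s' u1 = u1" using rep_proper[OF ac B] by auto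
    have 1: "eqE s' (Enc u0 u1)" using iv B eqd.eq_sym[OF o] A by blast
    have "eqE (Enc (rep C s' t0) (rep C s' t1)) (Enc u0 u1)"
      using I(1,2) r by (metis eqd.eq_cons_enc)
    then show ?thesis using 1 A B by (auto intro: eqd.eq_trans eqd.eq_sym)
  next
    assume A: "Enc t0 t1 \<notin> C" and B: "Enc u0 u1 \<notin> C"
    show ?thesis using A B I(1,2) by (auto intro: eqd.eq_cons_enc)
  qed
next
  case (eq_proj0_enc t0 t1 u0 u1)
  note H = eq_proj0_enc.hyps and I = eq_proj0_enc.IH
  have o: "eqE t0 u0" by (rule eqd.eq_proj0_enc[OF H(1-5)])
  have dyr: "dyT (rep C s' u0)" "dyT (rep C s' u1)" "dyT (rep C s' t0)" "dyT (rep C s' t1)"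
    using rep_dy[OF C ac s'] H(2-5) by auto
  show ?case
  proof (cases "Enc t0 t1 \<in> C"; cases "Enc u0 u1 \<in> C")
    assume A: "Enc t0 t1 \<in> C" and B: "Enc u0 u1 \<in> C"
    have "rep C s' t0 = t0" "rep C s' u0 = u0" using rep_proper[OF ac A] rep_proper[OF ac B] by auto
    then show ?thesis using o by simp
  next
    assume A: "Enc t0 t1 \<in> C" and B: "Enc u0 u1 \<notin> C"
    have r: "rep C s' t0 = t0" "rep C s' t1 = t1" using rep_proper[OF ac A] by auto
    have 1: "eqE s' (Enc t0 t1)" using iv A H(1) B by blast
    have "eqE (Enc t0 t1) (Enc (rep C s' u0) (rep C s' u1))"
      using I(1) A B 1 by (auto intro: eqd.eq_trans eqd.eq_sym)
    then have "eqE t0 (rep C s' u0)"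
      by (rule eqd.eq_proj0_enc) (use H(2,3) dyr in auto)
    then show ?thesis using r by simp
  next
    assume A: "Enc t0 t1 \<notin> C" and B: "Enc u0 u1 \<in> C"
    have r: "rep C s' u0 = u0" "rep C s' u1 = u1" using rep_proper[OF ac B] by auto
    have 1: "eqE s' (Enc u0 u1)" using iv B eqd.eq_sym[OF H(1)] A by blast
    have "eqE (Enc (rep C s' t0) (rep C s' t1)) (Enc u0 u1)"
      using I(1) A B 1 by (auto intro: eqd.eq_trans eqd.eq_sym)
    then have "eqE (rep C s' t0) u0"
      by (rule eqd.eq_proj0_enc) (use H(4,5) dyr in auto)
    then show ?thesis using r by simp
  next
    assume A: "Enc t0 t1 \<notin> C" and B: "Enc u0 u1 \<notin> C"
    have "eqE (Enc (rep C s' t0) (rep C s' t1)) (Enc (rep C s' u0) (rep C s' u1))"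
      using I(1) A B by simp
    then show ?thesis by (rule eqd.eq_proj0_enc) (use dyr in auto)
  qed
next
  case (eq_proj1_enc t0 t1 u0 u1)
  note H = eq_proj1_enc.hyps and I = eq_proj1_enc.IH
  have o: "eqE t1 u1" by (rule eqd.eq_proj1_enc[OF H(1-5)])
  have dyr: "dyT (rep C s' u0)" "dyT (rep C s' u1)" "dyT (rep C s' t0)" "dyT (rep C s' t1)"
    using rep_dy[OF C ac s'] H(2-5) by auto
  show ?case
  proof (cases "Enc t0 t1 \<in> C"; cases "Enc u0 u1 \<in> C")
    assume A: "Enc t0 t1 \<in> C" and B: "Enc u0 u1 \<in> C"
    have "rep C s' t1 = t1" "rep C s' u1 = u1" using rep_proper[OF ac A] rep_proper[OF ac B] by auto
    then show ?thesis using o by simp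
  next
    assume A: "Enc t0 t1 \<in> C" and B: "Enc u0 u1 \<notin> C"
    have r: "rep C s' t0 = t0" "rep C s' t1 = t1" using rep_proper[OF ac A] by auto
    have 1: "eqE s' (Enc t0 t1)" using iv A H(1) B by blast
    have "eqE (Enc t0 t1) (Enc (rep C s' u0) (rep C s' u1))"
      using I(1) A B 1 by (auto intro: eqd.eq_trans eqd.eq_sym)
    then have "eqE t1 (rep C s' u1)"
      by (rule eqd.eq_proj1_enc) (use H(2,3) dyr in auto)
    then show ?thesis using r by simp
  next
    assume A: "Enc t0 t1 \<notin> C" and B: "Enc u0 u1 \<in> C"
    have r: "rep C s' u0 = u0" "rep C s' u1 = u1" using rep_proper[OF ac B] by auto
    have 1: "eqE s' (Enc u0 u1)" using iv B eqd.eq_sym[OF H(1)] A by blast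
    have "eqE (Enc (rep C s' t0) (rep C s' t1)) (Enc u0 u1)"
      using I(1) A B 1 by (auto intro: eqd.eq_trans eqd.eq_sym)
    then have "eqE (rep C s' t1) u1"
      by (rule eqd.eq_proj1_enc) (use H(4,5) dyr in auto)
    then show ?thesis using r by simp
  next
    assume A: "Enc t0 t1 \<notin> C" and B: "Enc u0 u1 \<notin> C"
    have "eqE (Enc (rep C s' t0) (rep C s' t1)) (Enc (rep C s' u0) (rep C s' u1))"
      using I(1) A B by simp
    then show ?thesis by (rule eqd.eq_proj1_enc) (use dyr in auto)
  qed
qed

end



lemma finite_vars[simp]: "finite (vars t)"
  by (induction t) auto

lemma cmp_subst: "cmp t' \<Longrightarrow> cmp (subst \<sigma> t')"
  by (cases t') auto

context ctx
begin

definition Xo where "Xo = X \<inter> (vars t \<union> vars u)"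
definition valid :: "('v \<rightharpoonup> ('n,'v) trm) \<Rightarrow> bool" where
  "valid \<nu> \<longleftrightarrow> dom \<nu> = X \<and> (\<forall>y\<in>X. dyT (the (\<nu> y))) \<and> eqE (subst \<nu> t) (subst \<nu> u)"
definition W where "W \<nu> = (\<Union>y\<in>Xo. st (the (\<nu> y)))"
definition Bc where "Bc = {w \<in> st t \<union> st u. cmp w}"
definition P where "P \<nu> = subst \<nu> ` Bc"
definition bad where "bad \<nu> = {s \<in> W \<nu>. cmp s \<and> s \<notin> D \<and> s \<notin> P \<nu>}"
definition hard where "hard \<nu> s \<longleftrightarrow> (\<exists>c\<in>D \<union> P \<nu>. c \<noteq> s \<and> eqE s c) \<and>
   (\<forall>c\<in>D \<union> P \<nu> \<union> W \<nu>. c \<noteq> s \<and> eqE s c \<longrightarrow> \<not> dyT c)"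

lemma finite_W: "finite (W \<nu>)"
  unfolding W_def Xo_def by auto

lemma finite_bad: "finite (bad \<nu>)"
  unfolding bad_def by (rule finite_subset[OF _ finite_W]) auto

lemma W_dy: "valid \<nu> \<Longrightarrow> w \<in> W \<nu> \<Longrightarrow> dyT w \<or> w \<in> sts T"
  unfolding valid_def W_def Xo_def using dy_st by blast

lemma W_atom: "valid \<nu> \<Longrightarrow> w \<in> W \<nu> \<Longrightarrow> \<not> cmp w \<Longrightarrow> w \<in> sts T"
  unfolding valid_def W_def Xo_def using dy_atom by blast

lemma bad_dy: "valid \<nu> \<Longrightarrow> s \<in> bad \<nu> \<Longrightarrow> dyT s"
  using W_dy stsT_D unfolding bad_def by blast

lemma D_fix: "valid \<nu> \<Longrightarrow> w \<in> D \<Longrightarrow> subst \<nu> w = w"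
  using D_X[of w] unfolding valid_def by (intro subst_id) auto

lemma Bc_B: "Bc \<subseteq> B"
  unfolding Bc_def using B_cl tB uB by blast

lemma move:
  assumes v: "valid \<nu>" and C: "\<forall>a\<in>C. cmp a \<and> a \<notin> D \<and> a \<notin> P \<nu>" and ac: "AC C"
    and s': "dyT s'"
    and iv: "\<forall>a\<in>C. \<forall>b. eqE a b \<longrightarrow> b \<in> C \<or> eqE s' a"
    and sC: "s \<in> C" "s \<in> bad \<nu>"
    and st': "\<forall>v\<in>st s'. v \<notin> C \<and> (cmp v \<longrightarrow> v \<in> D \<or> v \<in> P \<nu> \<or> v \<in> W \<nu>)"
  shows "\<exists>\<nu>'. valid \<nu>' \<and> card (bad \<nu>') < card (bad \<nu>)"
proof -
  define \<nu>' where "\<nu>' = (\<lambda>y. map_option (rep C s') (\<nu> y))"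
  have C': "\<forall>a\<in>C. cmp a \<and> a \<notin> D" using C by auto
  have dom: "dom \<nu>' = X" using v by (auto simp: \<nu>'_def valid_def)
  have the': "the (\<nu>' y) = rep C s' (the (\<nu> y))" if "y \<in> X" for y
    using that v by (auto simp: \<nu>'_def valid_def)
  have comm0: "(\<forall>c\<in>st t'. cmp c \<longrightarrow> subst \<nu> c \<notin> C) \<Longrightarrow> subst \<nu>' t' = rep C s' (subst \<nu> t')" for t'
  proof (induction t')
    case (Var y)
    then show ?case using C by (cases "\<nu> y") (auto simp: \<nu>'_def)
  next
    case (Nm n)
    then show ?case using C by auto
  next
    case (Pair a b)
    then show ?case by auto
  next
    case (Enc a b)
    then show ?case by auto
  qed
  have comm: "subst \<nu>' t' = rep C s' (subst \<nu> t')" if "t' \<in> st t \<union> st u" for t'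
  proof (rule comm0, intro ballI impI)
    fix c assume "c \<in> st t'" "cmp c"
    then have "c \<in> Bc" using that st_trans unfolding Bc_def by blast
    then show "subst \<nu> c \<notin> C" using C unfolding P_def by blast
  qed
  have valid': "valid \<nu>'"
    unfolding valid_def
  proof (intro conjI ballI)
    show "dom \<nu>' = X" by (rule dom)
    fix y assume "y \<in> X"
    then show "dyT (the (\<nu>' y))" using the' rep_dy[OF C' ac s'] v by (auto simp: valid_def)
  next
    show "eqE (subst \<nu>' t) (subst \<nu>' u)"
      using comm[of t] comm[of u] rep_eqd[OF C' ac s' iv] v by (auto simp: valid_def)
  qed
  have P': "P \<nu>' = rep C s' ` P \<nu>"
    using comm unfolding P_def Bc_def by (auto simp: image_image)
  have XoX: "Xo \<subseteq> X" by (auto simp: Xo_def)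
  have W': "W \<nu>' \<subseteq> rep C s' ` (W \<nu> - C) \<union> st s'"
  proof
    fix w assume "w \<in> W \<nu>'"
    then obtain y where y: "y \<in> Xo" "w \<in> st (rep C s' (the (\<nu> y)))"
      using the' XoX unfolding W_def by auto
    then have "w \<in> rep C s' ` (st (the (\<nu> y)) - C) \<union> st s'" using rep_st by blast
    then show "w \<in> rep C s' ` (W \<nu> - C) \<union> st s'" using y unfolding W_def by blast
  qed
  have Dfix: "rep C s' w = w" if "w \<in> D" for w
    using that C' D_cl by (intro rep_id) blast
  have sub: "bad \<nu>' \<subseteq> rep C s' ` (bad \<nu> - C)"
  proof
    fix v' assume v': "v' \<in> bad \<nu>'"
    then have v'W: "v' \<in> W \<nu>'" and v'c: "cmp v'" and v'D: "v' \<notin> D" and v'P: "v' \<notin> P \<nu>'"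
      unfolding bad_def by auto
    have "v' \<in> rep C s' ` (W \<nu> - C)"
    proof (cases "v' \<in> st s'")
      case True
      have fix': "rep C s' v' = v'"
        using True st' st_trans by (intro rep_id) blast
      have "v' \<in> D \<or> v' \<in> P \<nu> \<or> v' \<in> W \<nu>" and "v' \<notin> C" using True st' v'c by auto
      moreover have "v' \<notin> P \<nu>" using v'P P' fix' by (metis image_eqI)
      ultimately have "v' \<in> W \<nu> - C" using v'D by auto
      then show ?thesis using fix' by (metis image_eqI)
    next
      case False
      then show ?thesis using W' v'W by auto
    qed
    then obtain v where v: "v \<in> W \<nu>" "v \<notin> C" "v' = rep C s' v" by auto
    have "cmp v" using v v'c C' rep_atom by metis
    moreover have "v \<notin> D" using v v'D Dfix by metis
    moreover have "v \<notin> P \<nu>" using v v'P P' by auto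
    ultimately show "v' \<in> rep C s' ` (bad \<nu> - C)" using v unfolding bad_def by auto
  qed
  have "card (bad \<nu>') \<le> card (rep C s' ` (bad \<nu> - C))"
    using sub finite_bad by (intro card_mono) auto
  also have "\<dots> \<le> card (bad \<nu> - C)" by (rule card_image_le) (use finite_bad in auto)
  also have "\<dots> < card (bad \<nu>)"
    using sC finite_bad by (intro psubset_card_mono) auto
  finally show ?thesis using valid' by blast
qed

end



context ctx
begin

lemma no_sub: assumes "subst (Some \<circ> lam) a = subst (Some \<circ> lam) c" "c \<in> st a" shows "c = a"
  using subst_size_less[OF assms(2), of "Some \<circ> lam"] assms(1) by fastforce

lemma st_tu: "a \<in> st b \<Longrightarrow> b \<in> st t \<union> st u \<Longrightarrow> a \<in> st t \<union> st u"
  using st_trans[of a b t] st_trans[of a b u] by blast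

lemma var_tu: "Var y \<in> st t \<union> st u \<Longrightarrow> y \<in> vars t \<union> vars u"
  using vars_st[of y t] vars_st[of y u] by blast

lemma st_P:
  assumes v: "valid \<nu>" and c: "c \<in> P \<nu>" and vc: "v \<in> st c" and cv: "cmp v"
  shows "v \<in> P \<nu> \<or> v \<in> W \<nu>"
proof -
  obtain t' where t': "t' \<in> Bc" "c = subst \<nu> t'" using c unfolding P_def by auto
  have t'st: "t' \<in> st t \<union> st u" using t' unfolding Bc_def by auto
  have dX: "dom \<nu> = X" using v unfolding valid_def by simp
  from st_subst_cases[OF vc[unfolded t'(2)]]
  show ?thesis
  proof
    assume "v \<in> subst \<nu> ` st t'"
    then obtain t'' where t'': "t'' \<in> st t'" "v = subst \<nu> t''" by auto
    have t''st: "t'' \<in> st t \<union> st u" by (rule st_tu[OF t''(1) t'st])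
    show ?thesis
    proof (cases "cmp t''")
      case True
      then have "t'' \<in> Bc" using t''st unfolding Bc_def by simp
      then show ?thesis using t''(2) unfolding P_def by simp
    next
      case False
      then obtain y where Var: "t'' = Var y" using cv t'' by (cases t'') auto
      show ?thesis
      proof (cases "\<nu> y")
        case None
        then show ?thesis using t'' Var cv by simp
      next
        case (Some w)
        then have "y \<in> X" using dX by blast
        moreover have "y \<in> vars t \<union> vars u" using t''st Var var_tu by simp
        ultimately have yX: "y \<in> Xo" unfolding Xo_def by simp
        have "v = the (\<nu> y)" using t'' Var Some by simp
        then have "v \<in> st (the (\<nu> y))" by simp
        then show ?thesis using yX unfolding W_def by blast
      qed
    qed
  next
    assume "\<exists>x\<in>vars t'. \<nu> x \<noteq> None \<and> v \<in> st (the (\<nu> x))"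
    then obtain x where x: "x \<in> vars t'" "\<nu> x \<noteq> None" "v \<in> st (the (\<nu> x))" by blast
    have "x \<in> X" using x(2) dX by blast
    moreover have "Var x \<in> st t'" by (rule vars_st[THEN iffD1, OF x(1)])
    then have "x \<in> vars t \<union> vars u" using st_tu[OF _ t'st] var_tu by blast
    ultimately have "x \<in> Xo" unfolding Xo_def by simp
    then show ?thesis using x(3) unfolding W_def by blast
  qed
qed

lemma step:
  assumes v: "valid \<nu>" and s: "s \<in> bad \<nu>" and nh: "\<not> hard \<nu> s"
  shows "\<exists>\<nu>'. valid \<nu>' \<and> card (bad \<nu>') < card (bad \<nu>)"
proof (cases "\<exists>c\<in>D \<union> P \<nu> \<union> W \<nu>. c \<noteq> s \<and> eqE s c \<and> dyT c")
  case True
  then obtain c where c: "c \<in> D \<union> P \<nu> \<union> W \<nu>" "c \<noteq> s" "eqE s c" "dyT c" by blast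
  have sb: "cmp s" "s \<notin> D" "s \<notin> P \<nu>" using s unfolding bad_def by auto
  show ?thesis
  proof (rule move[OF v, of "{s}" c s])
    show "\<forall>a\<in>{s}. cmp a \<and> a \<notin> D \<and> a \<notin> P \<nu>" using sb by auto
    show "AC {s}" unfolding AC_def by auto
    show "dyT c" by fact
    show "\<forall>a\<in>{s}. \<forall>b. eqE a b \<longrightarrow> b \<in> {s} \<or> eqE c a" using eqd.eq_sym[OF c(3)] by blast
    show "s \<in> {s}" by simp
    show "s \<in> bad \<nu>" by fact
    show "\<forall>v\<in>st c. v \<notin> {s} \<and> (cmp v \<longrightarrow> v \<in> D \<or> v \<in> P \<nu> \<or> v \<in> W \<nu>)"
    proof (intro ballI conjI impI)
      fix w assume w: "w \<in> st c"
      show "w \<notin> {s}"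
      proof
        assume "w \<in> {s}"
        then have "s \<in> st c" using w by simp
        then show False using no_sub[of c s] sound[OF c(3)] c(2) by auto
      qed
      assume cw: "cmp w"
      show "w \<in> D \<or> w \<in> P \<nu> \<or> w \<in> W \<nu>"
        using c(1)
      proof (elim UnE)
        assume "c \<in> D" then show ?thesis using D_cl w by blast
      next
        assume "c \<in> P \<nu>" then show ?thesis using st_P[OF v _ w cw] by blast
      next
        assume "c \<in> W \<nu>"
        then obtain y where "y \<in> Xo" "c \<in> st (the (\<nu> y))" unfolding W_def by blast
        then show ?thesis using st_trans[OF w] unfolding W_def by blast
      qed
    qed
  qed
next
  case False
  then have nrep: "\<not> (\<exists>c\<in>D \<union> P \<nu>. c \<noteq> s \<and> eqE s c)" using nh unfolding hard_def by blast
  have sb: "cmp s" "s \<notin> D" "s \<notin> P \<nu>" using s unfolding bad_def by auto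
  have "T \<noteq> {}" using dy_ne bad_dy[OF v s] by blast
  then obtain d0 where d0: "d0 \<in> T" by blast
  let ?C = "insert s {w. eqE s w}"
  have lamC: "subst (Some \<circ> lam) a = subst (Some \<circ> lam) s" if "a \<in> ?C" for a
    using that sound by auto
  show ?thesis
  proof (rule move[OF v, of ?C d0 s])
    show "\<forall>a\<in>?C. cmp a \<and> a \<notin> D \<and> a \<notin> P \<nu>"
    proof
      fix a assume a: "a \<in> ?C"
      show "cmp a \<and> a \<notin> D \<and> a \<notin> P \<nu>"
      proof (cases "a = s")
        case True then show ?thesis using sb by simp
      next
        case False
        then have e: "eqE s a" using a by auto
        then have nd: "a \<notin> D" "a \<notin> P \<nu>" using nrep False by auto
        have "cmp a"
        proof (rule ccontr)
          assume "\<not> cmp a"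
          then have "a \<in> sts T \<or> a \<in> fst ` E \<or> a \<in> snd ` E" using eqd_atom[OF e] by blast
          then have "a \<in> D" using stsT_D E_D by force
          then show False using nd by simp
        qed
        then show ?thesis using nd by simp
      qed
    qed
    show "AC ?C" unfolding AC_def
    proof (intro ballI impI)
      fix a c assume "a \<in> ?C" "c \<in> ?C" "c \<in> st a"
      then show "c = a" using no_sub lamC by metis
    qed
    show "dyT d0" using d0 by (rule dy.dy_ax)
    show "\<forall>a\<in>?C. \<forall>b. eqE a b \<longrightarrow> b \<in> ?C \<or> eqE d0 a"
    proof (intro ballI allI impI disjI1)
      fix a b assume a: "a \<in> ?C" and ab: "eqE a b"
      show "b \<in> ?C"
      proof (cases "a = s")
        case True then show ?thesis using ab by simp
      next
        case False then have "eqE s a" using a by simp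
        then show ?thesis using eqd.eq_trans[OF _ ab] by simp
      qed
    qed
    show "s \<in> ?C" by simp
    show "s \<in> bad \<nu>" by fact
    have "st d0 \<subseteq> D" using d0 T_D D_cl by blast
    moreover have "\<forall>a\<in>?C. a \<notin> D" using nrep sb by auto
    ultimately show "\<forall>v\<in>st d0. v \<notin> ?C \<and> (cmp v \<longrightarrow> v \<in> D \<or> v \<in> P \<nu> \<or> v \<in> W \<nu>)"
      by blast
  qed
qed

end



context ctx
begin

lemma Zlem:
  assumes v: "valid \<nu>" and H: "\<forall>s\<in>bad \<nu>. hard \<nu> s" and zW: "Var z \<in> W \<nu>" and zB: "Var z \<notin> B"
  shows "Var z \<in> subst \<nu> ` B"
proof -
  obtain y where y: "y \<in> Xo" "Var z \<in> st (the (\<nu> y))" using zW unfolding W_def by (rule UN_E)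
  have yX: "y \<in> X" using y(1) unfolding Xo_def by simp
  have "y \<in> vars t \<union> vars u" using y(1) unfolding Xo_def by simp
  then have ytu: "Var y \<in> st t \<or> Var y \<in> st u" using vars_st[of y t] vars_st[of y u] by simp
  have yB: "Var y \<in> B" using ytu B_cl[OF tB, of "Var y"] B_cl[OF uB, of "Var y"] by (elim disjE) simp_all
  have "y \<in> dom \<nu>" using yX v unfolding valid_def by simp
  then have sy: "subst \<nu> (Var y) = the (\<nu> y)" by (auto split: option.split)
  show ?thesis
  proof (cases "the (\<nu> y) = Var z")
    case True
    have "Var z = subst \<nu> (Var y)" using sy True by simp
    then show ?thesis using yB by (rule image_eqI)
  next
    case False
    obtain p where p: "p \<in> st (the (\<nu> y))" "Var z \<in> set (args p)"
      using child_exists[OF y(2)] False by (auto simp: eq_commute)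
    have pc: "cmp p" using args_cmp p(2) by blast
    have pW: "p \<in> W \<nu>" using y(1) p(1) unfolding W_def by auto
    have zp: "Var z \<in> st p" by (rule args_st[OF p(2)])
    have zvp: "z \<in> vars p" by (rule vars_st[THEN iffD2, OF zp])
    define \<sigma> where "\<sigma> = (Some \<circ> lam)"
    define \<sigma>' where "\<sigma>' = Some \<circ> (lam(z := Pair (lam z) (lam z)))"
    have zE: "z \<notin> vars a \<and> z \<notin> vars b" if "(a,b) \<in> E" for a b
    proof -
      have "a \<in> B" "b \<in> B" using E_B[OF that] by auto
      then have "Var z \<notin> st a" "Var z \<notin> st b" using B_cl[of a "Var z"] B_cl[of b "Var z"] zB by auto
      then show ?thesis using vars_st[of z a] vars_st[of z b] by simp
    qed
    have agree: "\<forall>x. x \<noteq> z \<longrightarrow> \<sigma> x = \<sigma>' x" by (simp add: \<sigma>_def \<sigma>'_def)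
    have diff: "\<sigma> z \<noteq> \<sigma>' z" by (simp add: \<sigma>_def \<sigma>'_def)
    have \<sigma>'E: "\<forall>(a,b)\<in>E. subst \<sigma>' a = subst \<sigma>' b"
    proof (clarify)
      fix a b assume ab: "(a,b)\<in>E"
      have "subst \<sigma>' a = subst \<sigma> a"
        by (rule subst_cong) (use zE[OF ab] agree in fastforce)
      moreover have "subst \<sigma>' b = subst \<sigma> b"
        by (rule subst_cong) (use zE[OF ab] agree in fastforce)
      ultimately show "subst \<sigma>' a = subst \<sigma>' b" using lam_E[OF ab] unfolding \<sigma>_def by simp
    qed
    show ?thesis
    proof (cases "p \<in> D")
      case True
      then have "p \<in> B" using D_B2 pc by fastforce
      then show ?thesis using B_cl[OF _ zp] zB by simp
    next
      case pD: False
      show ?thesis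
      proof (cases "p \<in> P \<nu>")
        case True
        then obtain t' where t': "t' \<in> Bc" "p = subst \<nu> t'" unfolding P_def by auto
        have "args p = map (subst \<nu>) (args t')" using t' args_subst unfolding Bc_def by auto
        then obtain t1 where t1: "t1 \<in> set (args t')" "Var z = subst \<nu> t1" using p(2) by auto
        have "t' \<in> B" using t'(1) Bc_B by blast
        then have "t1 \<in> B" using args_st[OF t1(1)] B_cl by simp
        then show ?thesis using t1 by auto
      next
        case pP: False
        have "p \<in> bad \<nu>" using pW pc pD pP unfolding bad_def by auto
        then have hp: "hard \<nu> p" using H by auto
        then obtain c where c: "c \<in> D \<union> P \<nu>" "c \<noteq> p" "eqE p c" unfolding hard_def by blast
        have cnd: "\<not> dyT c" using hp c unfolding hard_def by blast
        have e1: "subst \<sigma> p = subst \<sigma> c" using sound[OF c(3)] unfolding \<sigma>_def .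
        have e2: "subst \<sigma>' p = subst \<sigma>' c" using eqd_sound[OF c(3) \<sigma>'E] .
        show ?thesis
          using c(1)
        proof (elim UnE)
          assume cD: "c \<in> D"
          then have "c \<in> B" using D_B cnd by blast
          then have "Var z \<notin> st c" using B_cl[of c "Var z"] zB by auto
          then have "z \<notin> vars c" using vars_st[of z c] by simp
          then have "subst \<sigma> c = subst \<sigma>' c" by (intro subst_cong) (use agree in fastforce)
          moreover have "subst \<sigma> p \<noteq> subst \<sigma>' p"
            by (rule subst_vary[OF agree diff _ _ zvp]) (simp_all add: \<sigma>_def \<sigma>'_def)
          ultimately show ?thesis using e1 e2 by simp
        next
          assume "c \<in> P \<nu>"
          then obtain t' where t': "t' \<in> Bc" "c = subst \<nu> t'" unfolding P_def by auto
          have ct: "cmp t'" using t' unfolding Bc_def by auto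
          have cc: "cmp c" using cmp_subst ct t' by auto
          have ac: "args c = map (subst \<nu>) (args t')" using args_subst ct t' by auto
          have m1: "map (subst \<sigma>) (args p) = map (subst \<sigma>) (args c)" using subst_eq_args[OF e1 pc cc] .
          have m2: "map (subst \<sigma>') (args p) = map (subst \<sigma>') (args c)" using subst_eq_args[OF e2 pc cc] .
          obtain i where i: "i < length (args p)" "args p ! i = Var z" using p(2) by (auto simp: in_set_conv_nth)
          have len: "length (args c) = length (args p)" using m1 by (metis length_map)
          define q where "q = args c ! i"
          have q1: "subst \<sigma> (Var z) = subst \<sigma> q"
            using arg_cong[OF m1, of "\<lambda>l. l ! i"] i len unfolding q_def by simp
          have q2: "subst \<sigma>' (Var z) = subst \<sigma>' q"
            using arg_cong[OF m2, of "\<lambda>l. l ! i"] i len unfolding q_def by simp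
          have il: "i < length (args t')" using len i ac by simp
          have qq: "q = subst \<nu> (args t' ! i)" using ac il unfolding q_def by simp
          have a1: "args t' ! i \<in> set (args t')" using il by simp
          have "t' \<in> B" using t'(1) Bc_B by blast
          then have "args t' ! i \<in> B" by (rule B_cl[OF _ args_st[OF a1]])
          then have qB: "q \<in> subst \<nu> ` B" using qq by simp
          show ?thesis
          proof (cases "q = Var z")
            case True then show ?thesis using qB by simp
          next
            case qz: False
            show ?thesis
            proof (cases "z \<in> vars q")
              case True
              then have "Var z \<in> st q" by (rule vars_st[THEN iffD1])
              then have "size (subst \<sigma> (Var z)) < size (subst \<sigma> q)"
                by (rule subst_size_less) (use qz in simp)
              then show ?thesis using q1 by (metis less_irrefl)
            next
              case False
              then have eq: "subst \<sigma> q = subst \<sigma>' q" by (intro subst_cong) (use agree in fastforce)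
              have a: "subst \<sigma> (Var z) = lam z" by (simp add: \<sigma>_def)
              have b: "subst \<sigma>' (Var z) = Pair (lam z) (lam z)" by (simp add: \<sigma>'_def)
              have "lam z = Pair (lam z) (lam z)" using a b q1 q2 eq by metis
              then show ?thesis by simp
            qed
          qed
        qed
      qed
    qed
  qed
qed

lemma hardE: "hard \<nu> s \<Longrightarrow> c \<in> D \<union> P \<nu> \<union> W \<nu> \<Longrightarrow> c \<noteq> s \<Longrightarrow> eqE s c \<Longrightarrow> \<not> dyT c"
  unfolding hard_def by blast

lemma hard_ex: "hard \<nu> s \<Longrightarrow> \<exists>c. c \<in> D \<union> P \<nu> \<and> c \<noteq> s \<and> eqE s c"
  unfolding hard_def by blast

lemma final:
  assumes v: "valid \<nu>" and H: "\<forall>s\<in>bad \<nu>. hard \<nu> s"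
  shows "card (W \<nu>) \<le> card B"
proof -
  define N where "N = subst \<nu> ` B"
  have finN: "finite N" using B_fin unfolding N_def by simp
  have PN: "P \<nu> \<subseteq> N" using Bc_B unfolding P_def N_def by auto
  have DN: "c \<in> N" if "c \<in> D" "c \<in> B" for c
    using D_fix[OF v that(1)] that(2) unfolding N_def by (metis image_eqI)
  have cover: "W \<nu> \<subseteq> (W \<nu> \<inter> N) \<union> (bad \<nu> - N)"
  proof
    fix w assume w: "w \<in> W \<nu>"
    show "w \<in> (W \<nu> \<inter> N) \<union> (bad \<nu> - N)"
    proof (cases "w \<in> N")
      case True then show ?thesis using w by simp
    next
      case False
      show ?thesis
      proof (cases "cmp w")
        case True
        have "w \<notin> D"
        proof
          assume wD: "w \<in> D"
          then have "w \<in> B" using D_B2 True by fastforce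
          then show False using DN wD False by simp
        qed
        moreover have "w \<notin> P \<nu>" using PN False by auto
        ultimately show ?thesis using w True False unfolding bad_def by simp
      next
        case nc: False
        have wD: "w \<in> D" using W_atom[OF v w nc] stsT_D by auto
        show ?thesis
        proof (cases "w \<in> B")
          case True then show ?thesis using DN wD False by simp
        next
          case wB: False
          then obtain z where wz: "w = Var z" using D_B2 wD by blast
          then have "w \<in> N" using Zlem[OF v H] w wB unfolding N_def by simp
          then show ?thesis using False by simp
        qed
      qed
    qed
  qed
  define f where "f s = (SOME c. c \<in> D \<union> P \<nu> \<and> c \<noteq> s \<and> eqE s c)" for s
  have fp: "f s \<in> D \<union> P \<nu> \<and> f s \<noteq> s \<and> eqE s (f s)" if "s \<in> bad \<nu>" for s
  proof -
    have "\<exists>c. c \<in> D \<union> P \<nu> \<and> c \<noteq> s \<and> eqE s c" using H that hard_ex by simp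
    then show ?thesis unfolding f_def by (rule someI_ex)
  qed
  have fnd: "\<not> dyT (f s)" if "s \<in> bad \<nu>" for s
  proof -
    have "hard \<nu> s" using H that by simp
    moreover have "f s \<in> D \<union> P \<nu> \<union> W \<nu>" "f s \<noteq> s" "eqE s (f s)" using fp[OF that] by auto
    ultimately show ?thesis by (rule hardE)
  qed
  have fimg: "f ` (bad \<nu> - N) \<subseteq> N - W \<nu>"
  proof
    fix c assume "c \<in> f ` (bad \<nu> - N)"
    then obtain s where s: "s \<in> bad \<nu>" "c = f s" by auto
    have cN: "c \<in> N"
    proof (cases "c \<in> D")
      case True
      then have "c \<in> B" using D_B fnd[OF s(1)] s(2) by simp
      then show ?thesis using DN True by simp
    next
      case False
      then have "c \<in> P \<nu>" using fp[OF s(1)] s(2) by simp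
      then show ?thesis using PN by blast
    qed
    have "c \<notin> W \<nu>"
    proof
      assume "c \<in> W \<nu>"
      then have "dyT c \<or> c \<in> sts T" using W_dy[OF v] by blast
      moreover have "eqE s c" using fp[OF s(1)] s(2) by simp
      ultimately have "dyT c" using goodT by blast
      then show False using fnd[OF s(1)] s(2) by simp
    qed
    then show "c \<in> N - W \<nu>" using cN by simp
  qed
  have inj: "inj_on f (bad \<nu> - N)"
  proof (rule inj_onI)
    fix s1 s2 assume s1: "s1 \<in> bad \<nu> - N" and s2: "s2 \<in> bad \<nu> - N" and eq: "f s1 = f s2"
    show "s1 = s2"
    proof (rule ccontr)
      assume ne: "s1 \<noteq> s2"
      have a: "eqE s1 (f s1)" using fp s1 by blast
      have b: "eqE s2 (f s2)" using fp s2 by blast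
      have e12: "eqE s1 s2" using eqd.eq_trans[OF a eqd.eq_sym[OF b[unfolded eq[symmetric]]]] .
      have "s2 \<in> W \<nu>" using s2 unfolding bad_def by auto
      moreover have "dyT s2" using bad_dy[OF v] s2 by auto
      moreover have "hard \<nu> s1" using H s1 by auto
      ultimately show False using e12 ne hardE by blast
    qed
  qed
  have c1: "card (bad \<nu> - N) \<le> card (N - W \<nu>)"
    using card_inj_on_le[OF inj fimg] finN by auto
  have "card (W \<nu>) \<le> card ((W \<nu> \<inter> N) \<union> (bad \<nu> - N))"
    using cover finite_W finite_bad by (intro card_mono) auto
  also have "\<dots> \<le> card (W \<nu> \<inter> N) + card (bad \<nu> - N)" by (rule card_Un_le)
  also have "\<dots> \<le> card (W \<nu> \<inter> N) + card (N - W \<nu>)" using c1 by simp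
  also have "\<dots> = card N"
  proof -
    have "N = (W \<nu> \<inter> N) \<union> (N - W \<nu>)" by blast
    moreover have "card ((W \<nu> \<inter> N) \<union> (N - W \<nu>)) = card (W \<nu> \<inter> N) + card (N - W \<nu>)"
      using finN by (intro card_Un_disjoint) auto
    ultimately show ?thesis by simp
  qed
  also have "\<dots> \<le> card B" unfolding N_def by (rule card_image_le[OF B_fin])
  finally show ?thesis .
qed

lemma reduce: "valid \<mu> \<Longrightarrow> \<exists>\<nu>. valid \<nu> \<and> card (W \<nu>) \<le> card B"
proof (induction "card (bad \<mu>)" arbitrary: \<mu> rule: less_induct)
  case less
  show ?case
  proof (cases "\<forall>s\<in>bad \<mu>. hard \<mu> s")
    case True then show ?thesis using final less.prems by blast
  next
    case False
    then obtain s where "s \<in> bad \<mu>" "\<not> hard \<mu> s" by blast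
    then obtain \<nu>' where "valid \<nu>'" "card (bad \<nu>') < card (bad \<mu>)" using step less.prems by blast
    then show ?thesis using less.hyps by blast
  qed
qed

end



lemma pub_side:
  assumes san: "sanitized Vq S A" and a: "a \<in> A"
    and sides: "(e = fst (snd a) \<and> e' = snd (snd a)) \<or> (e = snd (snd a) \<and> e' = fst (snd a))"
    and vq: "vars e \<inter> Vq = {}" and un: "subst \<sigma> e = subst \<sigma> e'"
  shows "e \<in> S"
proof -
  have est: "st_asrt a = st e \<union> st e'" using sides unfolding st_asrt_def by auto
  have "e \<in> pubs Vq a"
    unfolding pubs_def
  proof (intro CollectI conjI notI)
    show "e \<in> st_asrt a" using est by simp
    show "vars e \<inter> Vq = {}" by fact
    assume "\<exists>s'\<in>st_asrt a. s' \<noteq> e \<and> e \<in> st s' \<and> vars s' \<inter> Vq = {}"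
    then obtain s' where s': "s' \<in> st e \<union> st e'" "s' \<noteq> e" "e \<in> st s'" using est by blast
    show False
    proof (cases "s' \<in> st e")
      case True then show False using st_antisym s' by blast
    next
      case False
      then have s'e': "s' \<in> st e'" using s' by simp
      have ee': "e \<in> st e'" using st_trans[OF s'(3) s'e'] .
      show False
      proof (cases "e = e'")
        case True then show False using False s'e' by simp
      next
        case ne: False
        have "size (subst \<sigma> e) < size (subst \<sigma> e')" using subst_size_less[OF ee' ne] .
        then show False using un by simp
      qed
    qed
  qed
  then show ?thesis using san a unfolding sanitized_def by blast
qed

theorem theorem2:
  fixes K :: "'n set" and ik :: "'n \<Rightarrow> 'n" and Vq :: "'v set"
    and S :: "('n, 'v) trm set" and A :: "('n, 'v) asrt set"
    and \<alpha> :: "('n, 'v) asrt" and \<mu> :: "'v \<rightharpoonup> ('n, 'v) trm"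
  assumes keys: "ik ` K \<subseteq> K" "\<forall>k\<in>K. ik (ik k) = k"
    and finS: "finite S" and finA: "finite A"
    and wfS: "\<forall>s\<in>S. wf_trm K s"
    and wfA: "\<forall>a\<in>A. wf_asrt K Vq a"
    and wf\<alpha>: "wf_asrt K Vq \<alpha>"
    and san: "sanitized Vq S A"
    and cons: "consistent (ker_E A)"
    and fresh: "bv \<alpha> \<inter> (varss S \<union> (\<Union>a\<in>A. asrt_vars a)) = {}"
    and \<mu>: "witness_ok K ik (ker_T S A) (ker_E A) \<alpha> \<mu>"
  shows "\<exists>\<nu>. witness_ok K ik (ker_T S A) (ker_E A) \<alpha> \<nu> \<and>
           (\<forall>x \<in> dom \<nu>. card (st (the (\<nu> x))) \<le> card (sts S \<union> st_asrts (insert \<alpha> A)))"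
proof -
  define D where "D = sts S \<union> st_asrts A \<union> Var ` (\<Union>a\<in>A. bv a)"
  define B where "B = sts S \<union> st_asrts (insert \<alpha> A)"
  define t where "t = fst (snd \<alpha>)"
  define u where "u = snd (snd \<alpha>)"
  define X where "X = bv \<alpha>"
  obtain lam where lamE: "\<forall>(a,b) \<in> ker_E A. subst (Some \<circ> lam) a = subst (Some \<circ> lam) b"
    using cons unfolding consistent_def by blast
  have kerT: "ker_T S A = S \<union> Var ` (\<Union>a\<in>A. bv a)" by (simp add: ker_T_def)
  have kerE: "(a, b) \<in> ker_E A \<longleftrightarrow> (\<exists>xs. (xs, a, b) \<in> A)" for a b
    by (auto simp: ker_E_def)
  have sts_in: "v \<in> sts S" if "w \<in> sts S" "v \<in> st w" for v w
    using that st_trans by (fastforce simp: sts_iff)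
  have asrts_in: "v \<in> st_asrts M" if wM: "w \<in> st_asrts M" and vw: "v \<in> st w" for v w M
  proof -
    obtain a where "a \<in> M" "w \<in> st (fst (snd a)) \<or> w \<in> st (snd (snd a))"
      using wM unfolding st_asrts_def st_asrt_def by blast
    then show ?thesis using st_trans[OF vw] unfolding st_asrts_def st_asrt_def by blast
  qed
  have side_asrts: "fst (snd a) \<in> st_asrts M" "snd (snd a) \<in> st_asrts M" if "a \<in> M" for a M
    using that unfolding st_asrts_def st_asrt_def by (auto intro!: bexI[OF _ that])
  interpret ctx K ik "ker_T S A" "ker_E A" D B t u X lam
  proof (unfold_locales)
    fix w assume "w \<in> ker_T S A"
    then show "wf_trm K w" using wfS by (auto simp: kerT)
  next
    fix w v assume "w \<in> D" "v \<in> st w"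
    then show "v \<in> D" unfolding D_def using sts_in asrts_in by auto
  next
    have "S \<subseteq> sts S" unfolding sts_def using st_refl by blast
    then show "ker_T S A \<subseteq> D" unfolding kerT D_def by blast
  next
    fix a b assume "(a, b) \<in> ker_E A"
    then obtain xs where "(xs, a, b) \<in> A" using kerE by blast
    then show "a \<in> D \<and> b \<in> D" "a \<in> B \<and> b \<in> B" unfolding D_def B_def
      using side_asrts[of "(xs, a, b)"] by auto
  next
    fix a b assume "(a, b) \<in> ker_E A"
    then show "subst (Some \<circ> lam) a = subst (Some \<circ> lam) b" using lamE by auto
  next
    fix w assume w: "w \<in> D"
    show "vars w \<inter> X = {}"
    proof -
      have "vars w \<subseteq> varss S \<union> (\<Union>a\<in>A. asrt_vars a)"
      proof
        fix x assume x: "x \<in> vars w"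
        then have xw: "Var x \<in> st w" by (rule vars_st[THEN iffD1])
        consider (S) "w \<in> sts S" | (A) "w \<in> st_asrts A" | (V) "w \<in> Var ` (\<Union>a\<in>A. bv a)"
          using w unfolding D_def by blast
        then show "x \<in> varss S \<union> (\<Union>a\<in>A. asrt_vars a)"
        proof cases
          case S
          then obtain s where "s \<in> S" "w \<in> st s" by (auto simp: sts_iff)
          then have "x \<in> vars s" using st_trans[OF xw] vars_st[of x s] by blast
          then show ?thesis using \<open>s \<in> S\<close> unfolding varss_def by blast
        next
          case A
          then obtain a where a: "a \<in> A" "w \<in> st (fst (snd a)) \<or> w \<in> st (snd (snd a))"
            unfolding st_asrts_def st_asrt_def by blast
          then have "x \<in> vars (fst (snd a)) \<or> x \<in> vars (snd (snd a))"
            using st_trans[OF xw, of "fst (snd a)"] st_trans[OF xw, of "snd (snd a)"]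
              vars_st[of x "fst (snd a)"] vars_st[of x "snd (snd a)"] by blast
          then show ?thesis using a(1) unfolding asrt_vars_def by blast
        next
          case V
          then obtain a where "a \<in> A" "w = Var x" "x \<in> bv a" using x by auto
          then show ?thesis unfolding asrt_vars_def bv_def by blast
        qed
      qed
      then show ?thesis using fresh unfolding X_def by blast
    qed
  next
    show "finite B" unfolding B_def using finS finA
      by (auto simp: sts_def st_asrts_def st_asrt_def)
  next
    fix w v assume "w \<in> B" "v \<in> st w"
    then show "v \<in> B" unfolding B_def using sts_in asrts_in by blast
  next
    show "t \<in> B" "u \<in> B" unfolding B_def t_def u_def using side_asrts[of \<alpha> "insert \<alpha> A"] by auto
  next
    fix c assume c: "c \<in> D" "\<not> dy K ik (ker_T S A) c"
    have "c \<notin> Var ` (\<Union>a\<in>A. bv a)"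
    proof
      assume "c \<in> Var ` (\<Union>a\<in>A. bv a)"
      then have "c \<in> ker_T S A" unfolding kerT by simp
      then show False using c(2) dy.dy_ax by blast
    qed
    then show "c \<in> B" using c(1) unfolding D_def B_def st_asrts_def by auto
  next
    fix w assume "w \<in> D" "w \<notin> B"
    then show "\<exists>z. w = Var z" unfolding D_def B_def st_asrts_def by auto
  next
    fix c s assume c: "c \<in> sts (ker_T S A)" and e: "eqd K ik (ker_T S A) (ker_E A) s c"
    show "dy K ik (ker_T S A) c"
    proof (cases "c \<in> ker_T S A")
      case True then show ?thesis by (rule dy.dy_ax)
    next
      case False
      then obtain s0 where s0: "s0 \<in> S" "c \<in> st s0" using c unfolding kerT by (auto simp: sts_iff)
      have g: "good K ik (ker_T S A) (ker_E A) c" using eqd_good[OF e] by simp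
      have wfc: "wf_trm K c" using wfS s0 wf_st by blast
      have vq: "vars c \<inter> Vq = {}"
      proof -
        have "vars c \<subseteq> vars s0"
        proof
          fix x assume "x \<in> vars c"
          then have "Var x \<in> st c" by (rule vars_st[THEN iffD1])
          then have "Var x \<in> st s0" using st_trans s0(2) by blast
          then show "x \<in> vars s0" by (rule vars_st[THEN iffD2])
        qed
        moreover have "vars s0 \<subseteq> varss S" using s0(1) unfolding varss_def by blast
        ultimately show ?thesis using san unfolding sanitized_def by blast
      qed
      have sides: "\<forall>e e2. ((e, e2) \<in> ker_E A \<or> (e2, e) \<in> ker_E A) \<longrightarrow> vars e \<inter> Vq = {} \<longrightarrow>
          dy K ik (ker_T S A) e"
      proof (intro allI impI)
        fix e e2 assume ee: "(e, e2) \<in> ker_E A \<or> (e2, e) \<in> ker_E A" and ve: "vars e \<inter> Vq = {}"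
        have "e \<in> S"
          using ee
        proof
          assume "(e, e2) \<in> ker_E A"
          then obtain xs where a: "(xs, e, e2) \<in> A" using kerE by blast
          show "e \<in> S"
            by (rule pub_side[OF san a _ ve, of e2 "Some \<circ> lam"]) (use lamE \<open>(e, e2) \<in> ker_E A\<close> in auto)
        next
          assume "(e2, e) \<in> ker_E A"
          then obtain xs where a: "(xs, e2, e) \<in> A" using kerE by blast
          show "e \<in> S"
            by (rule pub_side[OF san a _ ve, of e2 "Some \<circ> lam"]) (use lamE \<open>(e2, e) \<in> ker_E A\<close> in auto)
        qed
        then show "dy K ik (ker_T S A) e" unfolding kerT by (auto intro: dy.dy_ax)
      qed
      show ?thesis by (rule good_dy[OF g wfc vq sides])
    qed
  qed
  have \<mu>v: "valid \<mu>" unfolding valid_def using \<mu> unfolding witness_ok_def X_def t_def u_def by auto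
  obtain \<nu> where \<nu>: "valid \<nu>" "card (W \<nu>) \<le> card B" using reduce[OF \<mu>v] by blast
  show ?thesis
  proof (cases "X = {}")
    case True
    have "dom \<mu> = {}" using \<mu> True unfolding witness_ok_def X_def by simp
    then show ?thesis using \<mu> by blast
  next
    case False
    then obtain x0 where "x0 \<in> X" by blast
    then have "dy K ik (ker_T S A) (the (\<mu> x0))" using \<mu>v unfolding valid_def by blast
    then have "ker_T S A \<noteq> {}" by (rule dy_ne)
    then obtain d0 where d0: "d0 \<in> ker_T S A" by blast
    define \<nu>' where "\<nu>' = (\<lambda>y. if y \<in> X \<and> y \<notin> Xo then Some d0 else \<nu> y)"
    have domv: "dom \<nu> = X" using \<nu>(1) unfolding valid_def by simp
    have dom': "dom \<nu>' = X" using domv unfolding \<nu>'_def by (auto split: if_splits)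
    have agr: "subst \<nu>' r = subst \<nu> r" if "r = t \<or> r = u" for r
    proof (rule subst_cong, intro ballI)
      fix y assume "y \<in> vars r"
      then have "y \<in> vars t \<union> vars u" using that by auto
      then show "\<nu>' y = \<nu> y" unfolding \<nu>'_def Xo_def by auto
    qed
    have ok: "witness_ok K ik (ker_T S A) (ker_E A) \<alpha> \<nu>'"
      unfolding witness_ok_def
    proof (intro conjI ballI)
      show "dom \<nu>' = bv \<alpha>" using dom' X_def by simp
    next
      fix y assume "y \<in> dom \<nu>'"
      then have y: "y \<in> X" using dom' by simp
      show "dy K ik (ker_T S A) (the (\<nu>' y))"
      proof (cases "y \<in> Xo")
        case True then show ?thesis using \<nu>(1) y unfolding valid_def \<nu>'_def by auto
      next
        case False then show ?thesis using d0 y unfolding \<nu>'_def by (auto intro: dy.dy_ax)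
      qed
    next
      fix y r assume y: "y \<in> dom \<nu>'" and r: "r \<in> {fst (snd \<alpha>), snd (snd \<alpha>)}"
      have dd: "dom \<nu>' = dom \<mu>" using dom' \<mu> unfolding witness_ok_def X_def by simp
      have H: "\<forall>x\<in>dom \<mu>. \<forall>r\<in>{fst (snd \<alpha>), snd (snd \<alpha>)}. pos_of x r \<subseteq> absp K ik (ker_T S A \<union> Var ` dom \<mu>) r"
        using \<mu> unfolding witness_ok_def by blast
      show "pos_of y r \<subseteq> absp K ik (ker_T S A \<union> Var ` dom \<nu>') r"
        unfolding dd using H y r dd by blast
    next
      show "eqd K ik (ker_T S A) (ker_E A) (subst \<nu>' (fst (snd \<alpha>))) (subst \<nu>' (snd (snd \<alpha>)))"
      proof -
        have "eqd K ik (ker_T S A) (ker_E A) (subst \<nu> t) (subst \<nu> u)" using \<nu>(1) unfolding valid_def by simp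
        then show ?thesis using agr[of t] agr[of u] unfolding t_def u_def by simp
      qed
    qed
    have bound: "card (st (the (\<nu>' x))) \<le> card B" if "x \<in> dom \<nu>'" for x
    proof (cases "x \<in> Xo")
      case True
      then have "the (\<nu>' x) = the (\<nu> x)" unfolding \<nu>'_def by simp
      moreover have "st (the (\<nu> x)) \<subseteq> W \<nu>" using True unfolding W_def by blast
      ultimately have "card (st (the (\<nu>' x))) \<le> card (W \<nu>)" using card_mono[OF finite_W] by simp
      then show ?thesis using \<nu>(2) by simp
    next
      case False
      then have tx: "the (\<nu>' x) = d0" using that dom' unfolding \<nu>'_def by simp
      show ?thesis
      proof (cases "d0 \<in> S")
        case True
        then have "st d0 \<subseteq> sts S" unfolding sts_def by blast
        then have "st d0 \<subseteq> B" unfolding B_def by blast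
        then show ?thesis using tx B_fin by (simp add: card_mono)
      next
        case False
        then obtain z where "d0 = Var z" using d0 unfolding kerT by auto
        then have "card (st d0) = 1" by simp
        moreover have "B \<noteq> {}" using tB by auto
        then have "card B \<ge> 1" using B_fin by (simp add: Suc_le_eq card_gt_0_iff)
        ultimately show ?thesis using tx by simp
      qed
    qed
    show ?thesis using ok bound unfolding B_def by blast
  qed
qed


end
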